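(* Let $q$ be a prime power and let $1\le t_1<\cdots<t_r<n$ be divisors of $n$ such that $t_i$ divides $t_{i+1}$ for $1\le i\le r-1$. Let $\mathcal{F}=(\mathbb{F}_{q^{t_1}},\ldots,\mathbb{F}_{q^{t_r}})$ be the Galois flag of this type on $\mathbb{F}_{q^n}$ and let $\beta\in\mathbb{F}_{q^n}^*$. For each $1\le i\le r$, let $\beta_i$ be a generator of the cyclic group $\langle\beta\rangle\cap\mathbb{F}_{q^{t_i}}^*$ (which equals the stabilizer of $\mathbb{F}_{q^{t_i}}$ in $\langle\beta\rangle$). Then: (1) for each $1\le i\le r$, $\mathrm{Orb}_\beta(\mathbb{F}_{q^{t_i}})$ is a partial spread of dimension $t_i$ of $\mathbb{F}_{q^n}$; (2) for every $1\le i<j\le r$ and every $0\le l\le|\beta_j|-1$, the $\beta_j$-cyclic orbit code $\mathrm{Orb}_{\beta_j}(\mathbb{F}_{q^{t_i}}\beta^l)$ is a partial spread of dimension $t_i$ of the subspace $\mathbb{F}_{q^{t_j}}\beta^l$.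
   Context: $\mathbb{F}_{q^n}$ is regarded as an $\mathbb{F}_q$-vector space. For $\gamma\in\mathbb{F}_{q^n}^*$ and an $\mathbb{F}_q$-subspace $\mathcal{U}$, $\mathcal{U}\gamma=\{u\gamma:u\in\mathcal{U}\}$. For $\beta\in\mathbb{F}_{q^n}^*$ of multiplicative order $|\beta|$, $\mathrm{Orb}_\beta(\mathcal{U})=\{\mathcal{U}\beta^j:0\le j\le|\beta|-1\}$. A partial spread of dimension $t$ of an $\mathbb{F}_q$-subspace $\mathcal{W}$ is a set of $t$-dimensional $\mathbb{F}_q$-subspaces of $\mathcal{W}$ that pairwise intersect in $\{0\}$. *)

theory Defs
  imports "HOL-Computational_Algebra.Primes"
begin

text \<open>The ambient field F_{q^n} is a finite field type 'a of cardinality q^n.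
 Its subfield F_{q^t} (for t dividing n) is the set of roots of x^(q^t) - x.\<close>

definition subfld :: "nat \<Rightarrow> nat \<Rightarrow> 'a::field set" where
  "subfld q t = {x. x ^ (q ^ t) = x}"

definition prime_power :: "nat \<Rightarrow> bool" where
  "prime_power q \<longleftrightarrow> (\<exists>p k. prime p \<and> k > 0 \<and> q = p ^ k)"

definition smul_set :: "'a::field set \<Rightarrow> 'a \<Rightarrow> 'a set" where
  "smul_set U g = (\<lambda>u. u * g) ` U"

definition mord :: "'a::field \<Rightarrow> nat" where
  "mord b = (LEAST k. k > 0 \<and> b ^ k = 1)"

definition cyc :: "'a::field \<Rightarrow> 'a set" where
  "cyc b = {b ^ k | k. True}"

definition Orb :: "'a::field \<Rightarrow> 'a set \<Rightarrow> 'a set set" where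
  "Orb b U = {smul_set U (b ^ j) | j. j \<le> mord b - 1}"

definition Fq_subspace :: "nat \<Rightarrow> 'a::field set \<Rightarrow> bool" where
  "Fq_subspace q U \<longleftrightarrow> 0 \<in> U \<and> (\<forall>x\<in>U. \<forall>y\<in>U. x + y \<in> U)
     \<and> (\<forall>c\<in>subfld q 1. \<forall>x\<in>U. c * x \<in> U)"

definition Fq_dim :: "nat \<Rightarrow> 'a::field set \<Rightarrow> nat \<Rightarrow> bool" where
  "Fq_dim q U t \<longleftrightarrow> Fq_subspace q U \<and>
     (\<exists>f :: nat \<Rightarrow> 'a. (\<forall>i<t. f i \<in> U)
        \<and> U = {(\<Sum>i<t. c i * f i) | c. \<forall>i<t. c i \<in> subfld q 1}
        \<and> (\<forall>c. (\<forall>i<t. c i \<in> subfld q 1) \<and> (\<Sum>i<t. c i * f i) = 0 \<longrightarrow> (\<forall>i<t. c i = 0)))"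

definition partial_spread :: "nat \<Rightarrow> 'a::field set set \<Rightarrow> nat \<Rightarrow> 'a set \<Rightarrow> bool" where
  "partial_spread q S t W \<longleftrightarrow>
     (\<forall>U\<in>S. Fq_dim q U t \<and> U \<subseteq> W) \<and>
     (\<forall>U\<in>S. \<forall>V\<in>S. U \<noteq> V \<longrightarrow> U \<inter> V = {0})"

end

theory Submission
  imports Defs "HOL-Library.FuncSet" "HOL-Computational_Algebra.Polynomial"
begin


definition kspan :: "'a::field set \<Rightarrow> nat \<Rightarrow> (nat \<Rightarrow> 'a) \<Rightarrow> 'a set" where
  "kspan K m f = {(\<Sum>i<m. c i * f i) | c. \<forall>i<m. c i \<in> K}"

definition kindep :: "'a::field set \<Rightarrow> nat \<Rightarrow> (nat \<Rightarrow> 'a) \<Rightarrow> bool" where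
  "kindep K m f \<longleftrightarrow> (\<forall>c. (\<forall>i<m. c i \<in> K) \<and> (\<Sum>i<m. c i * f i) = 0 \<longrightarrow> (\<forall>i<m. c i = 0))"

definition kfield :: "'a::field set \<Rightarrow> bool" where
  "kfield K \<longleftrightarrow> 0 \<in> K \<and> 1 \<in> K \<and> (\<forall>a\<in>K. \<forall>b\<in>K. a + b \<in> K \<and> a * b \<in> K)
     \<and> (\<forall>a\<in>K. -a \<in> K \<and> inverse a \<in> K)"

definition ksub :: "'a::field set \<Rightarrow> 'a set \<Rightarrow> bool" where
  "ksub K V \<longleftrightarrow> 0 \<in> V \<and> (\<forall>x\<in>V. \<forall>y\<in>V. x + y \<in> V) \<and> (\<forall>c\<in>K. \<forall>x\<in>V. c * x \<in> V)"

lemma card_kspan: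
  assumes K: "kfield K" and fin: "finite K" and ind: "kindep K m f"
  shows "card (kspan K m f) = card K ^ m"
proof -
  let ?g = "\<lambda>c. \<Sum>i<m. c i * f i"
  have img: "kspan K m f = ?g ` ({..<m} \<rightarrow>\<^sub>E K)"
  proof
    show "kspan K m f \<subseteq> ?g ` ({..<m} \<rightarrow>\<^sub>E K)"
    proof
      fix x assume "x \<in> kspan K m f"
      then obtain c where c: "\<forall>i<m. c i \<in> K" "x = ?g c" unfolding kspan_def by blast
      have r: "restrict c {..<m} \<in> {..<m} \<rightarrow>\<^sub>E K" using c(1) by simp
      have "?g (restrict c {..<m}) = ?g c" by (rule sum.cong) simp_all
      hence "x = ?g (restrict c {..<m})" using c(2) by simp
      thus "x \<in> ?g ` ({..<m} \<rightarrow>\<^sub>E K)" using r by (rule image_eqI)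
    qed
    show "?g ` ({..<m} \<rightarrow>\<^sub>E K) \<subseteq> kspan K m f"
    proof
      fix x assume "x \<in> ?g ` ({..<m} \<rightarrow>\<^sub>E K)"
      then obtain c where c: "c \<in> {..<m} \<rightarrow>\<^sub>E K" "x = ?g c" by blast
      have "\<forall>i<m. c i \<in> K" using c(1) by auto
      thus "x \<in> kspan K m f" unfolding kspan_def using c(2) by (intro CollectI exI[of _ c]) simp
    qed
  qed
  have inj: "inj_on ?g ({..<m} \<rightarrow>\<^sub>E K)"
  proof (rule inj_onI)
    fix c d assume c: "c \<in> {..<m} \<rightarrow>\<^sub>E K" and d: "d \<in> {..<m} \<rightarrow>\<^sub>E K" and e: "?g c = ?g d"
    have "(\<Sum>i<m. (c i - d i) * f i) = ?g c - ?g d"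
      by (simp add: left_diff_distrib sum_subtractf)
    hence "(\<Sum>i<m. (\<lambda>i. c i - d i) i * f i) = 0" using e by simp
    moreover have "\<forall>i<m. c i - d i \<in> K"
    proof (intro allI impI)
      fix i assume "i < m"
      hence "c i \<in> K" "d i \<in> K" using c d by auto
      hence "c i + - d i \<in> K" using K unfolding kfield_def by blast
      thus "c i - d i \<in> K" by simp
    qed
    moreover have "(\<forall>i<m. c i - d i \<in> K) \<and> (\<Sum>i<m. (c i - d i) * f i) = 0 \<longrightarrow> (\<forall>i<m. c i - d i = 0)"
      using spec[OF ind[unfolded kindep_def], of "\<lambda>i. c i - d i"] by assumption
    ultimately have "\<forall>i<m. c i - d i = 0" by blast
    thus "c = d" using c d by (intro PiE_ext) auto
  qed
  have "card (kspan K m f) = card ({..<m} \<rightarrow>\<^sub>E K)" using img card_image[OF inj] by simp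
  also have "\<dots> = card K ^ m" by (simp add: card_PiE)
  finally show ?thesis .
qed

lemma kspan_sub:
  assumes V: "ksub K V" and f: "\<forall>i<m. f i \<in> V"
  shows "kspan K m f \<subseteq> V"
proof -
  have "\<forall>c. (\<forall>i<m. c i \<in> K) \<longrightarrow> (\<Sum>i<m. c i * f i) \<in> V" if "\<forall>i<m. f i \<in> V" for m
    using that
  proof (induction m)
    case 0 then show ?case using V by (simp add: ksub_def)
  next
    case (Suc m) then show ?case using V by (simp add: ksub_def)
  qed
  thus ?thesis using f unfolding kspan_def by auto
qed

lemma indep_exists:
  assumes K: "kfield K" and fin: "finite K" and V: "ksub K V" and finV: "finite V"
  shows "card K ^ m \<le> card V \<Longrightarrow> \<exists>f. (\<forall>i<m. f i \<in> V) \<and> kindep K m f"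
proof (induction m)
  case 0 then show ?case by (auto simp: kindep_def)
next
  case (Suc m)
  have two: "card K \<ge> 2"
  proof -
    have "{0,1} \<subseteq> K" using K by (auto simp: kfield_def)
    hence "card {0::'a,1} \<le> card K" using fin by (rule card_mono[rotated])
    thus ?thesis by simp
  qed
  have "card K ^ m < card K ^ Suc m" using two by simp
  hence lt: "card K ^ m < card V" using Suc.prems by linarith
  then obtain f where f: "\<forall>i<m. f i \<in> V" "kindep K m f" using Suc.IH by auto
  have "card (kspan K m f) < card V" using card_kspan[OF K fin f(2)] lt by simp
  moreover have "kspan K m f \<subseteq> V" using kspan_sub[OF V f(1)] .
  ultimately have "\<not> V \<subseteq> kspan K m f" by auto
  then obtain v where v: "v \<in> V" "v \<notin> kspan K m f" by auto
  define f' where "f' = f(m := v)"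
  have f'V: "\<forall>i<Suc m. f' i \<in> V" using f v by (auto simp: f'_def less_Suc_eq)
  have "kindep K (Suc m) f'"
    unfolding kindep_def
  proof (intro allI, rule impI)
    fix c assume c: "(\<forall>i<Suc m. c i \<in> K) \<and> (\<Sum>i<Suc m. c i * f' i) = 0"
    have sumeq: "(\<Sum>i<m. c i * f' i) = (\<Sum>i<m. c i * f i)" by (auto simp: f'_def intro: sum.cong)
    have eq: "(\<Sum>i<m. c i * f i) + c m * v = 0" using c sumeq by (simp add: f'_def)
    have cm: "c m = 0"
    proof (rule ccontr)
      assume ne: "c m \<noteq> 0"
      have "v = (\<Sum>i<m. (- inverse (c m) * c i) * f i)"
      proof -
        have "c m * v = - (\<Sum>i<m. c i * f i)" using eq by (metis add_eq_0_iff)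
        hence "inverse (c m) * (c m * v) = - inverse (c m) * (\<Sum>i<m. c i * f i)" by simp
        moreover have "inverse (c m) * (c m * v) = v" using ne by (simp add: mult.assoc[symmetric])
        ultimately have "v = - inverse (c m) * (\<Sum>i<m. c i * f i)" by simp
        thus ?thesis by (simp add: sum_distrib_left mult.assoc)
      qed
      moreover have "\<forall>i<m. - inverse (c m) * c i \<in> K" using c K unfolding kfield_def by auto
      ultimately have "v \<in> kspan K m f" unfolding kspan_def
        by (intro CollectI exI[of _ "\<lambda>i. - inverse (c m) * c i"]) simp
      thus False using v by simp
    qed
    hence "(\<Sum>i<m. c i * f i) = 0" using eq by simp
    hence "\<forall>i<m. c i = 0" using f(2) c unfolding kindep_def by auto
    thus "\<forall>i<Suc m. c i = 0" using cm by (auto simp: less_Suc_eq)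
  qed
  thus ?case using f'V by blast
qed

lemma kbasis_exists:
  assumes K: "kfield K" and fin: "finite K" and V: "ksub K V" and finV: "finite V"
    and c: "card V = card K ^ t"
  shows "\<exists>f. (\<forall>i<t. f i \<in> V) \<and> V = kspan K t f \<and> kindep K t f"
proof -
  obtain f where f: "\<forall>i<t. f i \<in> V" "kindep K t f" using indep_exists[OF K fin V finV, of t] c by auto
  have "kspan K t f = V"
    using kspan_sub[OF V f(1)] card_kspan[OF K fin f(2)] c finV by (metis card_subset_eq)
  thus ?thesis using f by auto
qed



lemma of_nat_card_UNIV: "of_nat (card (UNIV :: 'a::{field,finite} set)) = (0::'a)"
proof -
  have "(\<Sum>y\<in>(UNIV::'a set). 1 + y) = (\<Sum>y\<in>UNIV. y)"
    by (rule sum.reindex_bij_witness[of _ "\<lambda>y. y - 1" "\<lambda>y. 1 + y"]) auto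
  hence "of_nat (card (UNIV :: 'a set)) + (\<Sum>y\<in>(UNIV::'a set). y) = (\<Sum>y\<in>UNIV. y)"
    by (simp add: sum.distrib)
  thus ?thesis by simp
qed

lemma pow_card_same:
  fixes x :: "'a :: {field,finite}"
  shows "x ^ card (UNIV :: 'a set) = x"
proof (cases "x = 0")
  case False
  have "x * (\<Prod>y\<in>UNIV-{0}. x * y) = x * x ^ (card (UNIV :: 'a set) - 1) * \<Prod>(UNIV-{0})"
    by (simp add: prod.distrib mult_ac)
  also have "x * x ^ (card (UNIV :: 'a set) - 1) = x ^ Suc (card (UNIV :: 'a set) - 1)"
    by (subst power_Suc) auto
  also have "Suc (card (UNIV :: 'a set) - 1) = card (UNIV :: 'a set)"
    using finite_UNIV_card_ge_0[where ?'a = 'a] by simp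
  also have "(\<Prod>y\<in>UNIV-{0}. x * y) = (\<Prod>y\<in>UNIV-{0}. y)"
    by (rule prod.reindex_bij_witness[of _ "\<lambda>y. y / x" "\<lambda>y. x * y"]) (use False in auto)
  finally show ?thesis
    by simp
qed (use finite_UNIV_card_ge_0[where ?'a = 'a] in auto)

lemma char_facts:
  assumes pp: "prime_power q" and card: "card (UNIV :: 'a::{field,finite} set) = q ^ n"
  shows "\<exists>k. prime CHAR('a) \<and> q = CHAR('a) ^ k \<and> k > 0"
proof -
  obtain p k where p: "prime p" "k > 0" "q = p ^ k" using pp unfolding prime_power_def by auto
  have "of_nat (q ^ n) = (0::'a)" using of_nat_card_UNIV[where 'a='a] card by simp
  hence dvd: "CHAR('a) dvd q ^ n" by (metis of_nat_eq_0_iff_char_dvd)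
  have "q ^ n > 0" using p by (simp add: prime_gt_0_nat)
  hence "CHAR('a) > 0" using dvd by (metis dvd_0_left_iff gr0I)
  hence pr: "prime CHAR('a)" by (rule prime_CHAR_semidom)
  have "CHAR('a) dvd p ^ (k * n)" using dvd p by (simp add: power_mult)
  hence "CHAR('a) dvd p" using pr prime_dvd_power by blast
  hence "CHAR('a) = p" using pr p by (simp add: primes_dvd_imp_eq)
  thus ?thesis using pr p by auto
qed

lemma frob_add:
  assumes "prime CHAR('a::field)" "q = CHAR('a) ^ k"
  shows "((x::'a) + y) ^ (q ^ t) = x ^ (q ^ t) + y ^ (q ^ t)"
proof -
  have "q ^ t = CHAR('a) ^ (k * t)" using assms by (simp add: power_mult)
  thus ?thesis using freshmans_dream'[OF assms(1)] by simp
qed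

lemma frob_neg:
  assumes "prime CHAR('a::field)" "q = CHAR('a) ^ k" "q > 0"
  shows "(- (x::'a)) ^ (q ^ t) = - (x ^ (q ^ t))"
proof -
  have "0 = (x + - x) ^ (q ^ t)" using assms by simp
  also have "\<dots> = x ^ (q ^ t) + (- x) ^ (q ^ t)" by (rule frob_add[OF assms(1,2)])
  finally show ?thesis by (simp add: eq_neg_iff_add_eq_0 add.commute)
qed

lemma frob_diff:
  assumes "prime CHAR('a::field)" "q = CHAR('a) ^ k" "q > 0"
  shows "((x::'a) - y) ^ (q ^ t) = x ^ (q ^ t) - y ^ (q ^ t)"
  using frob_add[OF assms(1,2), of x "-y" t] frob_neg[OF assms, of y t] by simp

lemma subfld_kfield:
  assumes "prime CHAR('a::field)" "q = CHAR('a) ^ k" "q > 0"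
  shows "kfield (subfld q t :: 'a set)"
  unfolding kfield_def subfld_def
  using frob_add[OF assms(1,2)] frob_neg[OF assms] assms(3)
  by (auto simp: power_mult_distrib power_inverse)

lemma subfld_mono:
  assumes "a dvd b"
  shows "subfld q a \<subseteq> (subfld q b :: 'a::field set)"
proof
  fix x :: 'a assume x: "x \<in> subfld q a"
  obtain m where b: "b = a * m" using assms by auto
  have "x ^ (q ^ (a * m)) = x" for m
  proof (induction m)
    case 0 then show ?case by simp
  next
    case (Suc m)
    have "x ^ (q ^ (a * Suc m)) = (x ^ (q ^ a)) ^ (q ^ (a * m))"
      by (simp add: power_add power_mult[symmetric] mult.commute)
    also have "\<dots> = x" using x Suc unfolding subfld_def by simp
    finally show ?case .
  qed
  thus "x \<in> subfld q b" using b unfolding subfld_def by simp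
qed



lemma card_subfld:
  fixes q n t k :: nat
  assumes ch: "prime CHAR('a::{field,finite})" "q = CHAR('a) ^ k" and q2: "q \<ge> 2"
    and card: "card (UNIV::'a set) = q ^ n" and t: "t \<ge> 1" "t dvd n"
  shows "card (subfld q t :: 'a set) = q ^ t"
proof -
  define Q where "Q = q ^ t"
  have "q ^ 1 \<le> q ^ t" using q2 t by (intro power_increasing) auto
  hence Q2: "Q \<ge> 2" unfolding Q_def using q2 by simp
  have qpos: "q > 0" using q2 by simp
  let ?F = "subfld q t :: 'a set"
  have F: "?F = {x. x ^ Q = x}" unfolding subfld_def Q_def by simp
  define P0 :: "'a poly" where "P0 = monom 1 Q - monom 1 1"
  have polyP0: "poly P0 x = x ^ Q - x" for x by (simp add: P0_def poly_monom)
  have cP0: "coeff P0 i = (if i = Q then 1 else 0) - (if i = 1 then 1 else 0)" for i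
    by (simp add: P0_def coeff_monom)
  have "coeff P0 Q = 1" using Q2 cP0 by simp
  hence P0nz: "P0 \<noteq> 0" by auto
  have degP0: "degree P0 \<le> Q" using Q2 by (intro degree_le) (auto simp: cP0)
  have "?F = {x. poly P0 x = 0}" unfolding F polyP0 by simp
  hence up: "card ?F \<le> Q" using card_poly_roots_bound[OF P0nz] degP0 by simp
  have "card {0::'a, 1} \<le> card (UNIV :: 'a set)" by (rule card_mono) auto
  hence "n > 0" using card by (cases n) auto
  obtain d where nd: "n = t * d" using t by auto
  hence d1: "d \<ge> 1" using \<open>n > 0\<close> by (cases d) auto
  have Qd: "Q ^ d = q ^ n" unfolding Q_def nd by (simp add: power_mult)
  define phi :: "'a \<Rightarrow> 'a" where "phi x = x ^ Q - x" for x
  have phi_add: "phi (a + b) = phi a + phi b" for a b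
    unfolding phi_def Q_def using frob_add[OF ch, of a b t] by simp
  have phi_diff: "phi (a - b) = phi a - phi b" for a b
    unfolding phi_def Q_def using frob_diff[OF ch qpos, of a b t] by simp
  have Fphi: "?F = {x. phi x = 0}" unfolding F phi_def by simp
  have fdiffj: "(a - b) ^ (Q ^ j) = a ^ (Q ^ j) - b ^ (Q ^ j)" for a b :: 'a and j
  proof -
    have "Q ^ j = q ^ (t * j)" unfolding Q_def by (simp add: power_mult)
    thus ?thesis using frob_diff[OF ch qpos, of a b "t * j"] by simp
  qed
  define P :: "'a poly" where "P = (\<Sum>j<d. monom 1 (Q ^ j))"
  have polyP: "poly P y = (\<Sum>j<d. y ^ (Q ^ j))" for y by (simp add: P_def poly_sum poly_monom)
  have cP: "coeff P i = (\<Sum>j<d. if Q ^ j = i then 1 else 0)" for i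
    by (simp add: P_def coeff_sum coeff_monom)
  have inj_pow: "Q ^ a = Q ^ b \<longleftrightarrow> a = b" for a b using Q2 by (simp add: power_inject_exp)
  have "coeff P (Q ^ (d - 1)) = (\<Sum>j<d. if j = d - 1 then 1 else 0)"
    unfolding cP by (intro sum.cong) (auto simp: inj_pow)
  also have "\<dots> = 1" using d1 by simp
  finally have Pnz: "P \<noteq> 0" by auto
  have degP: "degree P \<le> Q ^ (d - 1)"
  proof (intro degree_le allI impI)
    fix i assume i: "Q ^ (d - 1) < i"
    have "\<forall>j<d. Q ^ j \<noteq> i"
    proof (intro allI impI)
      fix j assume "j < d"
      hence "Q ^ j \<le> Q ^ (d - 1)" using Q2 by (intro power_increasing) auto
      thus "Q ^ j \<noteq> i" using i by simp
    qed
    thus "coeff P i = 0" unfolding cP by simp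
  qed
  have Sphi: "poly P (phi x) = 0" for x
  proof -
    have "poly P (phi x) = (\<Sum>j<d. x ^ (Q ^ Suc j) - x ^ (Q ^ j))"
      unfolding polyP phi_def fdiffj
      by (intro sum.cong) (auto simp: power_mult[symmetric] mult.commute)
    also have "\<dots> = x ^ (Q ^ d) - x ^ (Q ^ 0)" by (rule sum_lessThan_telescope)
    also have "\<dots> = 0" using Qd card pow_card_same[of x] by simp
    finally show ?thesis .
  qed
  have "range phi \<subseteq> {y. poly P y = 0}" using Sphi by auto
  hence cr: "card (range phi) \<le> Q ^ (d - 1)"
    using card_poly_roots_bound[OF Pnz] degP poly_roots_finite[OF Pnz]
    by (meson card_mono le_trans)
  define s where "s y = (SOME x. phi x = y)" for y
  have s: "phi (s y) = y" if "y \<in> range phi" for y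
    using that unfolding s_def by (metis (mono_tags, lifting) rangeE someI)
  define h where "h = (\<lambda>(y, k). s y + k)"
  have phi0: "phi 0 = 0" unfolding phi_def using Q2 by simp
  have inj: "inj_on h (range phi \<times> ?F)"
  proof (rule inj_onI)
    fix a b assume a: "a \<in> range phi \<times> ?F" and b: "b \<in> range phi \<times> ?F" and e: "h a = h b"
    obtain y k where ay: "a = (y, k)" by (cases a)
    obtain y' k' where by': "b = (y', k')" by (cases b)
    have e': "s y + k = s y' + k'" using e ay by' unfolding h_def by simp
    have "phi (s y + k) = y" using a ay s Fphi phi_add by auto
    moreover have "phi (s y' + k') = y'" using b by' s Fphi phi_add by auto
    ultimately have "y = y'" using e' by simp
    thus "a = b" using e' ay by' by simp
  qed
  have img: "h ` (range phi \<times> ?F) = UNIV"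
  proof -
    have "x \<in> h ` (range phi \<times> ?F)" for x
    proof -
      let ?y = "phi x"
      have "phi (x - s ?y) = 0" using phi_diff s[of ?y] by simp
      hence "(?y, x - s ?y) \<in> range phi \<times> ?F" using Fphi by auto
      moreover have "h (?y, x - s ?y) = x" unfolding h_def by simp
      ultimately show ?thesis by (metis image_eqI)
    qed
    thus ?thesis by auto
  qed
  have "q ^ n = card (range phi \<times> ?F)"
    using card_image[OF inj] img card by simp
  also have "\<dots> = card (range phi) * card ?F" by (rule card_cartesian_product)
  also have "\<dots> \<le> Q ^ (d - 1) * card ?F" using cr by simp
  finally have "Q * Q ^ (d - 1) \<le> Q ^ (d - 1) * card ?F"
    using Qd d1 by (metis power_eq_if not_one_le_zero)
  hence "Q \<le> card ?F" using Q2 by (simp add: mult.commute)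
  thus ?thesis using up Q_def by simp
qed



lemma smul_smul: "smul_set (smul_set U a) b = smul_set U (a * b)"
  unfolding smul_set_def by (auto simp: image_image mult.assoc)

lemma smul_dim:
  assumes U: "Fq_dim q U t" and g: "g \<noteq> 0"
  shows "Fq_dim q (smul_set U g) t"
proof -
  obtain f where f: "\<forall>i<t. f i \<in> U" "U = {(\<Sum>i<t. c i * f i) | c. \<forall>i<t. c i \<in> subfld q 1}"
    "\<forall>c. (\<forall>i<t. c i \<in> subfld q 1) \<and> (\<Sum>i<t. c i * f i) = 0 \<longrightarrow> (\<forall>i<t. c i = 0)"
    using U unfolding Fq_dim_def by blast
  have sub: "Fq_subspace q U" using U unfolding Fq_dim_def by blast
  have "Fq_subspace q (smul_set U g)"
    unfolding Fq_subspace_def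
  proof (intro conjI ballI)
    show "0 \<in> smul_set U g" using sub unfolding Fq_subspace_def smul_set_def by force
  next
    fix x y assume "x \<in> smul_set U g" "y \<in> smul_set U g"
    then obtain u v where "u \<in> U" "v \<in> U" "x = u * g" "y = v * g" unfolding smul_set_def by blast
    moreover have "u + v \<in> U" using sub \<open>u \<in> U\<close> \<open>v \<in> U\<close> unfolding Fq_subspace_def by blast
    ultimately show "x + y \<in> smul_set U g" unfolding smul_set_def
      by (intro image_eqI[of _ _ "u + v"]) (simp_all add: distrib_right)
  next
    fix c x :: 'a assume "c \<in> subfld q 1" "x \<in> smul_set U g"
    then obtain u where "u \<in> U" "x = u * g" unfolding smul_set_def by blast
    moreover have "c * u \<in> U" using sub \<open>u \<in> U\<close> \<open>c \<in> subfld q 1\<close> unfolding Fq_subspace_def by blast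
    ultimately show "c * x \<in> smul_set U g" unfolding smul_set_def
      by (intro image_eqI[of _ _ "c * u"]) (simp_all add: mult.assoc)
  qed
  moreover have "\<forall>i<t. f i * g \<in> smul_set U g" using f(1) unfolding smul_set_def by auto
  moreover have "smul_set U g = {(\<Sum>i<t. c i * (f i * g)) | c. \<forall>i<t. c i \<in> subfld q 1}"
  proof -
    have e: "(\<Sum>i<t. c i * (f i * g)) = (\<Sum>i<t. c i * f i) * g" for c
      by (simp add: sum_distrib_right mult.assoc)
    have "smul_set U g = (\<lambda>u. u * g) ` {(\<Sum>i<t. c i * f i) | c. \<forall>i<t. c i \<in> subfld q 1}"
      unfolding smul_set_def using f(2) by simp
    also have "\<dots> = {(\<Sum>i<t. c i * f i) * g | c. \<forall>i<t. c i \<in> subfld q 1}" by blast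
    finally show ?thesis unfolding e .
  qed
  moreover have "\<forall>c. (\<forall>i<t. c i \<in> subfld q 1) \<and> (\<Sum>i<t. c i * (f i * g)) = 0 \<longrightarrow> (\<forall>i<t. c i = 0)"
  proof (intro allI, rule impI)
    fix c assume c: "(\<forall>i<t. c i \<in> subfld q 1) \<and> (\<Sum>i<t. c i * (f i * g)) = 0"
    have "(\<Sum>i<t. c i * (f i * g)) = (\<Sum>i<t. c i * f i) * g"
      by (simp add: sum_distrib_right mult.assoc)
    hence "(\<Sum>i<t. c i * f i) = 0" using c g by simp
    thus "\<forall>i<t. c i = 0" using f(3) c by blast
  qed
  ultimately show ?thesis unfolding Fq_dim_def
    by (intro conjI exI[of _ "\<lambda>i. f i * g"]) simp_all
qed

lemma kfield_pow: "kfield F \<Longrightarrow> c \<in> F \<Longrightarrow> c ^ m \<in> F"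
  by (induction m) (auto simp: kfield_def)

lemma smul_self:
  assumes F: "kfield F" and c: "c \<in> F" "c \<noteq> 0"
  shows "smul_set F c = F"
proof
  show "smul_set F c \<subseteq> F" using F c unfolding smul_set_def kfield_def by auto
  show "F \<subseteq> smul_set F c"
  proof
    fix x assume x: "x \<in> F"
    have "x * inverse c \<in> F" using F c x unfolding kfield_def by auto
    moreover have "x = (x * inverse c) * c" using c by (simp add: mult.assoc)
    ultimately show "x \<in> smul_set F c" unfolding smul_set_def by blast
  qed
qed

lemma smul_disj:
  assumes F: "kfield F" and a: "a \<noteq> 0" and b: "b \<noteq> 0" and ne: "smul_set F a \<noteq> smul_set F b"
  shows "smul_set F a \<inter> smul_set F b = {0}"
proof (rule ccontr)
  assume "smul_set F a \<inter> smul_set F b \<noteq> {0}"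
  moreover have "0 \<in> smul_set F a \<inter> smul_set F b" using F unfolding smul_set_def kfield_def by force
  ultimately obtain x where x: "x \<in> smul_set F a" "x \<in> smul_set F b" "x \<noteq> 0" by blast
  obtain u where u: "u \<in> F" "x = u * a" using x(1) unfolding smul_set_def by blast
  obtain v where v: "v \<in> F" "x = v * b" using x(2) unfolding smul_set_def by blast
  have u0: "u \<noteq> 0" using u x by auto
  have v0: "v \<noteq> 0" using v x by auto
  have w: "v * inverse u \<in> F" "v * inverse u \<noteq> 0" using F u v u0 v0 unfolding kfield_def by auto
  have "a = (v * inverse u) * b" using u v u0
    by (metis (no_types, lifting) mult.assoc mult.left_commute left_inverse mult_1)
  hence "smul_set F a = smul_set (smul_set F (v * inverse u)) b" by (simp add: smul_smul)
  also have "\<dots> = smul_set F b" using smul_self[OF F w] by simp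
  finally show False using ne by simp
qed

lemma dim_subfld:
  fixes q n t k :: nat
  assumes ch: "prime CHAR('a::{field,finite})" "q = CHAR('a) ^ k" and q2: "q \<ge> 2"
    and card: "card (UNIV::'a set) = q ^ n" and t: "t \<ge> 1" "t dvd n"
  shows "Fq_dim q (subfld q t :: 'a set) t"
proof -
  have qpos: "q > 0" using q2 by simp
  have K: "kfield (subfld q 1 :: 'a set)" by (rule subfld_kfield[OF ch qpos])
  have Ft: "kfield (subfld q t :: 'a set)" by (rule subfld_kfield[OF ch qpos])
  have sub1: "subfld q 1 \<subseteq> (subfld q t :: 'a set)" by (rule subfld_mono) simp
  have cK: "card (subfld q 1 :: 'a set) = q" using card_subfld[OF ch q2 card, of 1] by simp
  have cV: "card (subfld q t :: 'a set) = q ^ t" using card_subfld[OF ch q2 card t] .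
  have V: "ksub (subfld q 1) (subfld q t :: 'a set)"
    using Ft sub1 unfolding ksub_def kfield_def by blast
  have S: "Fq_subspace q (subfld q t :: 'a set)"
    using V unfolding ksub_def Fq_subspace_def by blast
  have "\<exists>f. (\<forall>i<t. f i \<in> (subfld q t :: 'a set)) \<and> subfld q t = kspan (subfld q 1) t f \<and> kindep (subfld q 1) t f"
  proof -
    have cV': "card (subfld q t :: 'a set) = card (subfld q 1 :: 'a set) ^ t" using cK cV by simp
    have fK: "finite (subfld q 1 :: 'a set)" by simp
    have fV: "finite (subfld q t :: 'a set)" by simp
    show ?thesis using kbasis_exists[OF K fK V fV cV'] .
  qed
  then obtain f where f: "\<forall>i<t. f i \<in> (subfld q t :: 'a set)" "subfld q t = kspan (subfld q 1) t f"
    "kindep (subfld q 1) t f" by blast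
  show ?thesis unfolding Fq_dim_def using S f unfolding kspan_def kindep_def by blast
qed

lemma chain:
  fixes t :: "nat \<Rightarrow> nat" and i j r :: nat
  assumes h: "\<forall>i. 1 \<le> i \<and> i < r \<longrightarrow> t i < t (i + 1) \<and> t i dvd t (i + 1)"
  shows "1 \<le> i \<Longrightarrow> i \<le> j \<Longrightarrow> j \<le> r \<Longrightarrow> (t i dvd t j \<and> t i \<le> (t j :: nat))"
proof (induction j)
  case 0 then show ?case by simp
next
  case (Suc j)
  show ?case
  proof (cases "i = Suc j")
    case True then show ?thesis by simp
  next
    case False
    hence "i \<le> j" using Suc.prems by simp
    hence ih: "t i dvd t j \<and> t i \<le> t j" using Suc by simp
    have "t j < t (j + 1) \<and> t j dvd t (j + 1)" using h Suc.prems \<open>i \<le> j\<close> by simp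
    thus ?thesis using ih by (auto intro: dvd_trans)
  qed
qed



theorem corollary4p13:
  fixes q n r :: nat and t :: "nat \<Rightarrow> nat" and \<beta> :: "'a::{field,finite}"
    and \<beta>s :: "nat \<Rightarrow> 'a"
  assumes "prime_power q"
    and "card (UNIV :: 'a set) = q ^ n"
    and "1 \<le> t 1"
    and "\<forall>i. 1 \<le> i \<and> i < r \<longrightarrow> t i < t (i + 1) \<and> t i dvd t (i + 1)"
    and "\<forall>i\<in>{1..r}. t i dvd n"
    and "t r < n"
    and "\<beta> \<noteq> 0"
    and "\<forall>i\<in>{1..r}. \<beta>s i \<in> cyc \<beta> \<inter> (subfld q (t i) - {0})
            \<and> cyc (\<beta>s i) = cyc \<beta> \<inter> (subfld q (t i) - {0})"
  shows "(\<forall>i\<in>{1..r}. partial_spread q (Orb \<beta> (subfld q (t i))) (t i) UNIV)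
    \<and> (\<forall>i j l. 1 \<le> i \<and> i < j \<and> j \<le> r \<and> l \<le> mord (\<beta>s j) - 1 \<longrightarrow>
          partial_spread q (Orb (\<beta>s j) (smul_set (subfld q (t i)) (\<beta> ^ l))) (t i)
            (smul_set (subfld q (t j)) (\<beta> ^ l)))"
proof -
  note pp = assms(1) and card = assms(2) and t1 = assms(3) and ch = assms(4)
    and tn = assms(5) and b0 = assms(7) and bs = assms(8)
  obtain k where k: "prime CHAR('a)" "q = CHAR('a) ^ k" "k > 0" using char_facts[OF pp card] by blast
  have "CHAR('a) \<ge> 2" using k(1) by (rule prime_ge_2_nat)
  moreover have "CHAR('a) ^ 1 \<le> CHAR('a) ^ k" using k(3) \<open>CHAR('a) \<ge> 2\<close>
    by (intro power_increasing) auto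
  ultimately have q2: "q \<ge> 2" using k(2) by simp
  have qpos: "q > 0" using q2 by simp
  have tge: "t i \<ge> 1" if "1 \<le> i" "i \<le> r" for i
    using chain[OF ch, of 1 i] that t1 by simp
  have tdvd: "t i dvd t j" if "1 \<le> i" "i \<le> j" "j \<le> r" for i j
    using chain[OF ch, of i j] that by simp
  have dimF: "Fq_dim q (subfld q (t i) :: 'a set) (t i)" if "1 \<le> i" "i \<le> r" for i
    using dim_subfld[OF k(1,2) q2 card tge[OF that]] tn that by simp
  have kF: "kfield (subfld q s :: 'a set)" for s by (rule subfld_kfield[OF k(1,2) qpos])
  have P1: "partial_spread q (Orb \<beta> (subfld q (t i))) (t i) UNIV" if i: "i \<in> {1..r}" for i
    unfolding partial_spread_def Orb_def
  proof (rule conjI; intro ballI impI)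
    fix U assume "U \<in> {smul_set (subfld q (t i)) (\<beta> ^ j) |j. j \<le> mord \<beta> - 1}"
    then obtain j where U: "U = smul_set (subfld q (t i)) (\<beta> ^ j)" by blast
    show "Fq_dim q U (t i) \<and> U \<subseteq> UNIV" unfolding U
      using smul_dim[OF dimF] i b0 by simp
  next
    fix U V assume "U \<in> {smul_set (subfld q (t i)) (\<beta> ^ j) |j. j \<le> mord \<beta> - 1}"
      "V \<in> {smul_set (subfld q (t i)) (\<beta> ^ j) |j. j \<le> mord \<beta> - 1}" "U \<noteq> V"
    then obtain a b where U: "U = smul_set (subfld q (t i)) (\<beta> ^ a)"
      and V: "V = smul_set (subfld q (t i)) (\<beta> ^ b)" and ne: "U \<noteq> V" by blast
    show "U \<inter> V = {0}" unfolding U V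
      by (rule smul_disj[OF kF]) (use b0 ne U V in simp_all)
  qed
  have P2: "partial_spread q (Orb (\<beta>s j) (smul_set (subfld q (t i)) (\<beta> ^ l))) (t i)
            (smul_set (subfld q (t j)) (\<beta> ^ l))"
    if ij: "1 \<le> i" "i < j" "j \<le> r" for i j l
  proof -
    have jr: "j \<in> {1..r}" using ij by simp
    have bsj: "\<beta>s j \<in> subfld q (t j)" "\<beta>s j \<noteq> 0" using bs jr by auto
    have sub: "subfld q (t i) \<subseteq> (subfld q (t j) :: 'a set)"
      by (rule subfld_mono) (rule tdvd, use ij in simp_all)
    show ?thesis
      unfolding partial_spread_def Orb_def
    proof (rule conjI; intro ballI impI)
      fix U assume "U \<in> {smul_set (smul_set (subfld q (t i)) (\<beta> ^ l)) (\<beta>s j ^ m) |m. m \<le> mord (\<beta>s j) - 1}"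
      then obtain m where U: "U = smul_set (subfld q (t i)) (\<beta> ^ l * \<beta>s j ^ m)"
        by (auto simp: smul_smul)
      have nz: "\<beta> ^ l * \<beta>s j ^ m \<noteq> 0" using b0 bsj by simp
      have "Fq_dim q U (t i)" unfolding U using smul_dim[OF dimF nz] ij by simp
      moreover have "U \<subseteq> smul_set (subfld q (t j)) (\<beta> ^ l)"
      proof
        fix x assume "x \<in> U"
        then obtain u where u: "u \<in> subfld q (t i)" "x = u * (\<beta> ^ l * \<beta>s j ^ m)"
          unfolding U smul_set_def by blast
        have "u \<in> subfld q (t j)" using u sub by blast
        moreover have "\<beta>s j ^ m \<in> subfld q (t j)" using kfield_pow[OF kF bsj(1)] .
        ultimately have "u * \<beta>s j ^ m \<in> subfld q (t j)" using kF[of "t j"] unfolding kfield_def by blast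
        moreover have "x = (u * \<beta>s j ^ m) * \<beta> ^ l" using u by (simp add: mult_ac)
        ultimately show "x \<in> smul_set (subfld q (t j)) (\<beta> ^ l)" unfolding smul_set_def by blast
      qed
      ultimately show "Fq_dim q U (t i) \<and> U \<subseteq> smul_set (subfld q (t j)) (\<beta> ^ l)" by blast
    next
      fix U V assume "U \<in> {smul_set (smul_set (subfld q (t i)) (\<beta> ^ l)) (\<beta>s j ^ m) |m. m \<le> mord (\<beta>s j) - 1}"
        "V \<in> {smul_set (smul_set (subfld q (t i)) (\<beta> ^ l)) (\<beta>s j ^ m) |m. m \<le> mord (\<beta>s j) - 1}" "U \<noteq> V"
      then obtain a b where U: "U = smul_set (subfld q (t i)) (\<beta> ^ l * \<beta>s j ^ a)"
        and V: "V = smul_set (subfld q (t i)) (\<beta> ^ l * \<beta>s j ^ b)" and ne: "U \<noteq> V"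
        by (auto simp: smul_smul)
      show "U \<inter> V = {0}" unfolding U V
        by (rule smul_disj[OF kF]) (use b0 bsj ne U V in simp_all)
    qed
  qed
  show ?thesis using P1 P2 by blast
qed


end
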